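(* Let $\lambda\in\mathbb{C}^*$ and $\alpha_1,\alpha_2,\beta_1,\beta_2\in\mathbb{C}$ with $(\alpha_1,\beta_1)\neq(0,0)$ and $(\alpha_2,\beta_2)\neq(0,0)$. Consider the tensor product $\mathcal{L}$-module $\Omega(\lambda,\alpha_1,\beta_1)\otimes\Omega(\lambda,\alpha_2,\beta_2)$ (both factors being $\mathbb{C}[Y]$), and let $U=\mathrm{span}\{\sum_{t=0}^{j}\binom{j}{t}Y^{j-t}\otimes Y^t\mid j\in\mathbb{N}\}$. Then $U$ is a nonzero proper $\mathcal{L}$-submodule of $\Omega(\lambda,\alpha_1,\beta_1)\otimes\Omega(\lambda,\alpha_2,\beta_2)$; consequently $\Omega(\lambda,\alpha_1,\beta_1)\otimes\Omega(\lambda,\alpha_2,\beta_2)$ is a reducible $\mathcal{L}$-module.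
   Context: The (centerless) Heisenberg-Virasoro algebra $\mathcal{L}$ is the complex Lie algebra with basis $\{L_m,H_m\mid m\in\mathbb{Z}\}$ and brackets $[L_m,L_n]=(n-m)L_{m+n}$, $[L_m,H_n]=nH_{m+n}$, $[H_m,H_n]=0$. For $\lambda\in\mathbb{C}^*$ and $\alpha,\beta\in\mathbb{C}$, $\Omega(\lambda,\alpha,\beta)$ denotes the $\mathcal{L}$-module $\mathbb{C}[Y]$ with $L_m f(Y)=\lambda^m(Y+m\alpha)f(Y-m)$ and $H_m f(Y)=\beta\lambda^m f(Y-m)$ for $m\in\mathbb{Z}$. The tensor product has action $x(v\otimes w)=xv\otimes w+v\otimes xw$. $\mathbb{N}$ denotes non-negative integers. *)

theory Defs
  imports Complex_Main "HOL-Computational_Algebra.Polynomial"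
begin

text \<open>Basis elements of the Heisenberg-Virasoro algebra: L m and H m, m an integer.\<close>
datatype hv_basis = Lg int | Hg int

fun omega_act :: "complex \<Rightarrow> complex \<Rightarrow> complex \<Rightarrow> hv_basis \<Rightarrow> complex poly \<Rightarrow> complex poly" where
  "omega_act lam al be (Lg m) f =
     smult (lam powi m) ([:of_int m * al, 1:] * pcompose f [:- of_int m, 1:])"
| "omega_act lam al be (Hg m) f =
     smult (be * lam powi m) (pcompose f [:- of_int m, 1:])"

text \<open>Model of C[Y] (x) C[Y]: the polynomial ring (C[Y])[Z], where
  f (x) g corresponds to f(Y) g(Z); a general element F equals
  sum over b of (coeff F b) (x) Y^b.\<close>
type_synonym tensor = "complex poly poly"

definition tens :: "complex poly \<Rightarrow> complex poly \<Rightarrow> tensor" where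
  "tens f g = map_poly (\<lambda>c. smult c f) g"

definition tscale :: "complex \<Rightarrow> tensor \<Rightarrow> tensor" where
  "tscale c F = smult [:c:] F"

definition tensor_act ::
  "(hv_basis \<Rightarrow> complex poly \<Rightarrow> complex poly) \<Rightarrow> (hv_basis \<Rightarrow> complex poly \<Rightarrow> complex poly)
     \<Rightarrow> hv_basis \<Rightarrow> tensor \<Rightarrow> tensor" where
  "tensor_act A1 A2 x F =
     (\<Sum>b\<le>degree F. tens (A1 x (coeff F b)) (monom 1 b) + tens (coeff F b) (A2 x (monom 1 b)))"

definition is_submodule :: "(hv_basis \<Rightarrow> tensor \<Rightarrow> tensor) \<Rightarrow> tensor set \<Rightarrow> bool" where
  "is_submodule act W \<longleftrightarrow> module.subspace tscale W \<and> (\<forall>x. \<forall>w\<in>W. act x w \<in> W)"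

definition reducible :: "(hv_basis \<Rightarrow> tensor \<Rightarrow> tensor) \<Rightarrow> bool" where
  "reducible act \<longleftrightarrow> (\<exists>W. is_submodule act W \<and> W \<noteq> {0} \<and> W \<noteq> UNIV)"

end

theory Submission
  imports Defs
begin

definition ev :: "tensor \<Rightarrow> complex \<Rightarrow> complex \<Rightarrow> complex" where
  "ev F y z = poly (poly F [:z:]) y"

lemma module_tscale: "module tscale"
  by unfold_locales (auto simp: tscale_def smult_add_right smult_add_left
      mult.commute
      simp flip: smult_add_left[of "[:a:]" "[:b:]" for a b] one_pCons)

lemma ev_add: "ev (F + G) y z = ev F y z + ev G y z"
  by (simp add: ev_def)

lemma ev_sum: "ev (sum f A) y z = (\<Sum>a\<in>A. ev (f a) y z)"
  by (induction A rule: infinite_finite_induct) (auto simp: ev_def)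

lemma ev_tscale: "ev (tscale c F) y z = c * ev F y z"
  by (simp add: ev_def tscale_def)

lemma ev_zero: "ev 0 y z = 0" by (simp add: ev_def)

lemma poly_tens: "poly (tens f g) [:z:] = smult (poly g z) f"
  unfolding tens_def
  by (induction g) (auto simp: map_poly_pCons smult_add_left mult.commute)

lemma ev_tens: "ev (tens f g) y z = poly f y * poly g z"
  by (simp add: ev_def poly_tens)

lemma ev_coeffs: "ev F y z = (\<Sum>b\<le>degree F. poly (coeff F b) y * z ^ b)"
proof -
  have "poly F [:z:] = (\<Sum>b\<le>degree F. coeff F b * [:z:] ^ b)" by (rule poly_altdef)
  then show ?thesis by (simp add: ev_def poly_sum)
qed

lemma ev_inj: assumes "\<And>y z. ev F y z = ev G y z" shows "F = G"
proof -
  let ?H = "F - G"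
  have "poly ?H [:z:] = 0" for z
  proof -
    have "poly (poly ?H [:z:]) y = 0" for y using assms[of y z] by (simp add: ev_def)
    then show ?thesis using poly_all_0_iff_0 by blast
  qed
  then have sub: "range (\<lambda>z::complex. [:z:]) \<subseteq> {x. poly ?H x = 0}" by auto
  have "infinite (range (\<lambda>z::complex. [:z:]))"
    using finite_imageD[of "\<lambda>z::complex. [:z:]" UNIV] infinite_UNIV_char_0
    by (auto simp: inj_on_def)
  then have "infinite {x. poly ?H x = 0}" using sub finite_subset by blast
  then have "?H = 0" using poly_roots_finite by blast
  then show ?thesis by simp
qed

definition u :: "nat \<Rightarrow> tensor" where
  "u j = (\<Sum>t\<le>j. tscale (of_nat (j choose t)) (tens (monom 1 (j - t)) (monom 1 t)))"

lemma ev_u: "ev (u j) y z = (y + z) ^ j"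
proof -
  have "(y + z) ^ j = (z + y) ^ j" by (simp add: add.commute)
  also have "\<dots> = (\<Sum>t\<le>j. of_nat (j choose t) * z ^ t * y ^ (j - t))" by (rule binomial_ring)
  finally show ?thesis
    by (simp add: u_def ev_sum ev_tscale ev_tens poly_monom mult_ac)
qed

definition D :: "complex poly \<Rightarrow> tensor" where
  "D P = (\<Sum>j\<le>degree P. tscale (coeff P j) (u j))"

lemma ev_D: "ev (D P) y z = poly P (y + z)"
  by (simp add: D_def ev_sum ev_tscale ev_u poly_altdef)

lemma ev_act_L: "ev (tensor_act (omega_act lam al1 be1) (omega_act lam al2 be2) (Lg m) F) y z =
  lam powi m * ((of_int m*al1 + y) * ev F (y - of_int m) z + (of_int m * al2 + z) * ev F y (z - of_int m))"
  unfolding tensor_act_def ev_sum ev_add ev_tens ev_coeffs[of F]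
  by (simp add: poly_pcompose poly_monom sum_distrib_left sum.distrib algebra_simps)

lemma ev_act_H: "ev (tensor_act (omega_act lam al1 be1) (omega_act lam al2 be2) (Hg m) F) y z =
  lam powi m * (be1 * ev F (y - of_int m) z + be2 * ev F y (z - of_int m))"
  unfolding tensor_act_def ev_sum ev_add ev_tens ev_coeffs[of F]
  by (simp add: poly_pcompose poly_monom sum_distrib_left sum.distrib algebra_simps)

lemma D_eqI: "(\<And>y z. ev F y z = poly P (y + z)) \<Longrightarrow> F = D P"
  by (rule ev_inj) (simp add: ev_D)

theorem mainTheorem15:
  fixes lam al1 al2 be1 be2 :: complex
  assumes "lam \<noteq> 0"
    and "(al1, be1) \<noteq> (0, 0)"
    and "(al2, be2) \<noteq> (0, 0)"
  defines "act \<equiv> tensor_act (omega_act lam al1 be1) (omega_act lam al2 be2)"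
    and "U \<equiv> module.span tscale
               (range (\<lambda>j::nat. \<Sum>t\<le>j. tscale (of_nat (j choose t))
                                         (tens (monom 1 (j - t)) (monom 1 t))))"
  shows "is_submodule act U \<and> U \<noteq> {0} \<and> U \<noteq> UNIV \<and> reducible act"
proof -
  interpret M: module tscale by (rule module_tscale)
  have U': "U = M.span (range u)" unfolding U_def u_def by simp
  have sub: "M.subspace (range D)"
    unfolding M.subspace_def
  proof (intro conjI ballI allI)
    show "0 \<in> range D"
      using D_eqI[of 0 0] by (simp add: ev_zero)
  next
    fix x y assume "x \<in> range D" "y \<in> range D"
    then obtain P Q where "x = D P" "y = D Q" by auto
    then show "x + y \<in> range D"
      using D_eqI[of "D P + D Q" "P + Q"] by (simp add: ev_add ev_D)
  next
    fix c x assume "x \<in> range D"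
    then obtain P where "x = D P" by auto
    then show "tscale c x \<in> range D"
      using D_eqI[of "tscale c (D P)" "smult c P"] by (simp add: ev_tscale ev_D)
  qed
  have UD: "U = range D"
  proof
    have "range u \<subseteq> range D"
    proof
      fix x assume "x \<in> range u"
      then obtain j where "x = u j" by auto
      then show "x \<in> range D"
        using D_eqI[of "u j" "monom 1 j"] by (simp add: ev_u poly_monom)
    qed
    then show "U \<subseteq> range D" unfolding U' using M.span_minimal sub by blast
  next
    show "range D \<subseteq> U"
    proof
      fix x assume "x \<in> range D"
      then obtain P where "x = D P" by auto
      have "D P \<in> M.span (range u)" unfolding D_def
        by (rule M.span_sum, rule M.span_scale, rule M.span_base) simp
      then show "x \<in> U" unfolding U' using \<open>x = D P\<close> by simp
    qed
  qed
  have stable: "act x w \<in> U" if "w \<in> U" for x w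
  proof -
    obtain P where w: "w = D P" using \<open>w \<in> U\<close> UD by auto
    show ?thesis
    proof (cases x)
      case (Lg m)
      have "act x w = D (smult (lam powi m) ([:of_int m * (al1 + al2), 1:] * pcompose P [:- of_int m, 1:]))"
        by (rule D_eqI) (simp add: act_def Lg w ev_act_L ev_D poly_pcompose algebra_simps)
      then show ?thesis using UD by auto
    next
      case (Hg m)
      have "act x w = D (smult (lam powi m * (be1 + be2)) (pcompose P [:- of_int m, 1:]))"
        by (rule D_eqI) (simp add: act_def Hg w ev_act_H ev_D poly_pcompose algebra_simps)
      then show ?thesis using UD by auto
    qed
  qed
  have subm: "is_submodule act U"
    unfolding is_submodule_def using stable U' by auto
  have ne: "U \<noteq> {0}"
  proof
    assume "U = {0}"
    then have "D 1 = 0" using UD by auto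
    then have "ev (D 1) 0 0 = ev 0 0 0" by simp
    then show False by (simp add: ev_D ev_zero)
  qed
  have nu: "U \<noteq> UNIV"
  proof
    assume "U = UNIV"
    then obtain P where P: "tens [:0,1:] 1 = D P" using UD by (metis UNIV_I imageE)
    have "ev (tens [:0,1:] 1) 1 0 = ev (D P) 1 0" "ev (tens [:0,1:] 1) 0 1 = ev (D P) 0 1"
      using P by simp_all
    then show False by (simp add: ev_tens ev_D)
  qed
  show ?thesis using subm ne nu unfolding reducible_def by blast
qed

end
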